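(* Let $I,S\ge 0$ be integers and consider the pairing process described in the context. The minimum, over all possible wirings, of the number of bb-pairings equals $$L(I,S)=\begin{cases}0 & \text{if } I\le S,\\ \frac{I-S}{2} & \text{if } I>S \text{ and } I-S \text{ is even},\\ \frac{I-S-1}{2} & \text{if } I>S \text{ and } I-S \text{ is odd},\end{cases}$$ and the maximum number of bb-pairings in a possible wiring is $\lfloor I/2\rfloor$.
   Context: Pairing process: there are $I$ infected devices $b_1,\dots,b_I$ and $S$ clean devices $w_1,\dots,w_S$. For $t=1,\dots,I$ in this order: if $b_t$ is not yet paired and at least one device other than $b_t$ is not yet paired, then $b_t$ chooses one of the currently unpaired devices other than itself uniformly at random, independently of previous choices, and becomes paired with it; otherwise $b_t$ does nothing. Each device belongs to at most one pair. The wiring is the final set of pairs; a bb-pairing is a pair consisting of two infected devices; a wiring is possible if it occurs with positive probability. *)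

theory Defs
  imports Main
begin

text \<open>Devices: infected device b_t is Inl t (t < I), clean device w_j is Inr j (j < S).
  Indices are 0-based: step t (0-based) is performed by Inl t.\<close>

type_synonym device = "nat + nat"

definition devices :: "nat \<Rightarrow> nat \<Rightarrow> device set" where
  "devices I S = Inl ` {..<I} \<union> Inr ` {..<S}"

definition unpaired :: "nat \<Rightarrow> nat \<Rightarrow> device set set \<Rightarrow> device set" where
  "unpaired I S P = devices I S - \<Union> P"

text \<open>run I S t P: after the first t steps of the process, the set of pairs P can have
  arisen with positive probability (every individual uniform choice has positive
  probability, so this is exactly nondeterministic reachability).\<close>

inductive run :: "nat \<Rightarrow> nat \<Rightarrow> nat \<Rightarrow> device set set \<Rightarrow> bool" for I S where
  start: "run I S 0 {}"
| idle: "\<lbrakk> run I S t P; t < I;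
           Inl t \<notin> unpaired I S P \<or> unpaired I S P - {Inl t} = {} \<rbrakk>
         \<Longrightarrow> run I S (Suc t) P"
| choose: "\<lbrakk> run I S t P; t < I; Inl t \<in> unpaired I S P;
             d \<in> unpaired I S P; d \<noteq> Inl t \<rbrakk>
         \<Longrightarrow> run I S (Suc t) (insert {Inl t, d} P)"

definition possible_wiring :: "nat \<Rightarrow> nat \<Rightarrow> device set set \<Rightarrow> bool" where
  "possible_wiring I S W \<longleftrightarrow> run I S I W"

definition is_infected :: "device \<Rightarrow> bool" where
  "is_infected x \<longleftrightarrow> (\<exists>t. x = Inl t)"

definition bb_count :: "device set set \<Rightarrow> nat" where
  "bb_count W = card {p \<in> W. \<forall>x\<in>p. is_infected x}"

definition L :: "nat \<Rightarrow> nat \<Rightarrow> nat" where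
  "L I S = (if I \<le> S then 0
            else if even (I - S) then (I - S) div 2
            else (I - S - 1) div 2)"

end

theory Submission
  imports Defs
begin

lemma inl_inf[simp]: "is_infected (Inl s)" and inr_inf[simp]: "\<not> is_infected (Inr j)"
  by (auto simp: is_infected_def)

lemma run_sub: "run I S t P \<Longrightarrow> \<Union>P \<subseteq> devices I S"
  by (induction rule: run.induct) (auto simp: unpaired_def devices_def)

lemma run_fin: "run I S t P \<Longrightarrow> finite P"
  by (induction rule: run.induct) auto

lemma run_last: "run I S t P \<Longrightarrow> \<forall>s<t. Inl s \<in> \<Union>P \<or> unpaired I S P \<subseteq> {Inl s}"
proof (induction rule: run.induct)
  case start
  then show ?case by simp
next
  case (idle t P)
  then show ?case
    by (auto simp: less_Suc_eq unpaired_def devices_def)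
next
  case (choose t P d)
  have m: "unpaired I S (insert {Inl t, d} P) \<subseteq> unpaired I S P"
    by (auto simp: unpaired_def)
  show ?case
  proof (intro allI impI)
    fix s assume "s < Suc t"
    then consider "s < t" | "s = t" by linarith
    then show "Inl s \<in> \<Union>(insert {Inl t, d} P) \<or> unpaired I S (insert {Inl t, d} P) \<subseteq> {Inl s}"
    proof cases
      case 1 then show ?thesis using choose.IH m by blast
    next
      case 2 then show ?thesis by simp
    qed
  qed
qed

lemma run_cnt: "run I S t P \<Longrightarrow>
  card (\<Union>P \<inter> range Inl) = 2 * bb_count P + card (\<Union>P \<inter> range Inr)"
proof (induction rule: run.induct)
  case start
  then show ?case by (simp add: bb_count_def)
next
  case (idle t P)
  then show ?case by simp
next
  case (choose t P d)
  have fin: "finite P" using choose.hyps(1) by (rule run_fin)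
  have sub: "\<Union>P \<subseteq> devices I S" using choose.hyps(1) by (rule run_sub)
  have finU: "finite (\<Union>P)" using sub by (rule finite_subset) (simp add: devices_def)
  have t: "Inl t \<notin> \<Union>P" and dn: "d \<notin> \<Union>P" using choose.hyps by (auto simp: unpaired_def)
  have pn: "{Inl t, d} \<notin> P" using t by blast
  show ?case
  proof (cases d)
    case (Inl s)
    have A: "\<Union>(insert {Inl t, d} P) \<inter> range Inl = insert (Inl t) (insert (Inl s) (\<Union>P \<inter> range Inl))"
      using Inl by auto
    have B: "\<Union>(insert {Inl t, d} P) \<inter> range Inr = \<Union>P \<inter> range Inr"
      using Inl by auto
    have C: "{p \<in> insert {Inl t, d} P. \<forall>x\<in>p. is_infected x} = insert {Inl t, d} {p \<in> P. \<forall>x\<in>p. is_infected x}"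
      using Inl by auto
    have "card (insert (Inl t) (insert (Inl s) (\<Union>P \<inter> range Inl))) = card (\<Union>P \<inter> range Inl) + 2"
      using t dn Inl choose.hyps(5) finU by auto
    moreover have "card (insert {Inl t, d} {p \<in> P. \<forall>x\<in>p. is_infected x}) = bb_count P + 1"
      using pn fin by (simp add: bb_count_def)
    ultimately show ?thesis using A B C choose.IH by (simp add: bb_count_def)
  next
    case (Inr j)
    have A: "\<Union>(insert {Inl t, d} P) \<inter> range Inl = insert (Inl t) (\<Union>P \<inter> range Inl)"
      using Inr by auto
    have B: "\<Union>(insert {Inl t, d} P) \<inter> range Inr = insert (Inr j) (\<Union>P \<inter> range Inr)"
      using Inr by auto
    have C: "{p \<in> insert {Inl t, d} P. \<forall>x\<in>p. is_infected x} = {p \<in> P. \<forall>x\<in>p. is_infected x}"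
      using Inr by auto
    have "card (insert (Inl t) (\<Union>P \<inter> range Inl)) = card (\<Union>P \<inter> range Inl) + 1"
      using t finU by auto
    moreover have "card (insert (Inr j) (\<Union>P \<inter> range Inr)) = card (\<Union>P \<inter> range Inr) + 1"
      using dn Inr finU by auto
    ultimately show ?thesis using A B C choose.IH by (simp add: bb_count_def)
  qed
qed

lemma run_ext: "run I S t P \<Longrightarrow> t \<le> I \<Longrightarrow> \<exists>P'. run I S I P' \<and> P \<subseteq> P'"
proof (induction "I - t" arbitrary: t P)
  case 0
  then show ?case by (metis diff_is_0_eq le_antisym order_refl)
next
  case (Suc n)
  then have tI: "t < I" by linarith
  show ?case
  proof (cases "Inl t \<notin> unpaired I S P \<or> unpaired I S P - {Inl t} = {}")
    case True
    then have "run I S (Suc t) P" using Suc.prems tI by (blast intro: run.idle)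
    then show ?thesis using Suc.hyps(1)[of "Suc t"] Suc.hyps(2) tI by auto
  next
    case False
    then obtain d where d: "d \<in> unpaired I S P" "d \<noteq> Inl t" and i: "Inl t \<in> unpaired I S P" by blast
    then have "run I S (Suc t) (insert {Inl t, d} P)" using Suc.prems tI by (blast intro: run.choose)
    then obtain P' where "run I S I P'" "insert {Inl t, d} P \<subseteq> P'"
      using Suc.hyps(1)[of "Suc t"] Suc.hyps(2) tI by (metis Suc_diff_Suc Suc_leI nat.inject)
    then show ?thesis by blast
  qed
qed

lemma run_min: "m \<le> I \<Longrightarrow> m \<le> S \<Longrightarrow> run I S m ((\<lambda>i. {Inl i, Inr i}) ` {..<m})"
proof (induction m)
  case 0
  then show ?case using run.start by simp
next
  case (Suc m)
  have r: "run I S m ((\<lambda>i. {Inl i, Inr i}) ` {..<m})" using Suc by simp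
  have a: "Inl m \<in> unpaired I S ((\<lambda>i. {Inl i, Inr i}) ` {..<m})"
    using Suc.prems by (auto simp: unpaired_def devices_def)
  have b: "Inr m \<in> unpaired I S ((\<lambda>i. {Inl i, Inr i}) ` {..<m})"
    using Suc.prems by (auto simp: unpaired_def devices_def)
  have "run I S (Suc m) (insert {Inl m, Inr m} ((\<lambda>i. {Inl i, Inr i}) ` {..<m}))"
    using run.choose[OF r _ a b] Suc.prems by simp
  then show ?case by (simp add: lessThan_Suc)
qed

lemma run_max: "2 * k \<le> I \<Longrightarrow> run I S (2 * k) ((\<lambda>i. {Inl (2*i), Inl (2*i+1)}) ` {..<k})"
proof (induction k)
  case 0
  then show ?case using run.start by simp
next
  case (Suc k)
  let ?Q = "(\<lambda>i. {Inl (2*i), Inl (2*i+1)}) ` {..<k}"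
  let ?Q' = "(\<lambda>i. {Inl (2*i), Inl (2*i+1)}) ` {..<Suc k}"
  have r: "run I S (2*k) ?Q" using Suc by simp
  have a: "Inl (2*k) \<in> unpaired I S ?Q"
    using Suc.prems by (auto simp: unpaired_def devices_def)
  have b: "Inl (2*k+1) \<in> unpaired I S ?Q"
    using Suc.prems by (auto simp: unpaired_def devices_def)
  have "run I S (Suc (2*k)) (insert {Inl (2*k), Inl (2*k+1)} ?Q)"
    using run.choose[OF r _ a b] Suc.prems by simp
  then have r2: "run I S (Suc (2*k)) ?Q'" by (simp add: lessThan_Suc)
  have "Inl (Suc (2*k)) \<notin> unpaired I S ?Q'" by (auto simp: unpaired_def)
  then have "run I S (Suc (Suc (2*k))) ?Q'"
    using run.idle[OF r2] Suc.prems by simp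
  then show ?case by simp
qed

lemma bb_mono: "P \<subseteq> P' \<Longrightarrow> finite P' \<Longrightarrow> bb_count P \<le> bb_count P'"
  unfolding bb_count_def by (rule card_mono) auto

lemma bb_bounds:
  assumes "run I S I W"
  shows "2 * bb_count W + card (\<Union>W \<inter> range Inr) = card (\<Union>W \<inter> range Inl)"
    "card (\<Union>W \<inter> range Inr) \<le> S" "card (\<Union>W \<inter> range Inl) \<le> I"
    "I \<le> card (\<Union>W \<inter> range Inl) + 1"
proof -
  show "2 * bb_count W + card (\<Union>W \<inter> range Inr) = card (\<Union>W \<inter> range Inl)"
    using run_cnt[OF assms] by simp
  have sub: "\<Union>W \<subseteq> devices I S" by (rule run_sub[OF assms])
  have "\<Union>W \<inter> range Inr \<subseteq> Inr ` {..<S}" using sub by (auto simp: devices_def)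
  then have "card (\<Union>W \<inter> range Inr) \<le> card (Inr ` {..<S} :: device set)" by (intro card_mono) auto
  then show "card (\<Union>W \<inter> range Inr) \<le> S" by (simp add: card_image)
  have "\<Union>W \<inter> range Inl \<subseteq> Inl ` {..<I}" using sub by (auto simp: devices_def)
  then have "card (\<Union>W \<inter> range Inl) \<le> card (Inl ` {..<I} :: device set)" by (intro card_mono) auto
  then show "card (\<Union>W \<inter> range Inl) \<le> I" by (simp add: card_image)
  have finU: "finite (\<Union>W)" using sub by (rule finite_subset) (simp add: devices_def)
  let ?D = "Inl ` {..<I} :: device set"
  let ?A = "\<Union>W \<inter> range Inl"
  have c1: "card (?D - ?A) \<le> 1"
  proof (cases "?D - ?A = {}")
    case True then show ?thesis by (simp only: True card.empty)
  next
    case False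
    then obtain s where s: "s < I" "Inl s \<notin> \<Union>W" by blast
    then have "unpaired I S W \<subseteq> {Inl s}" using run_last[OF assms] by blast
    moreover have "?D - ?A \<subseteq> unpaired I S W" by (auto simp: unpaired_def devices_def)
    ultimately have "?D - ?A \<subseteq> {Inl s}" by blast
    then have "card (?D - ?A) \<le> card {Inl s :: device}" by (intro card_mono) auto
    then show ?thesis by simp
  qed
  have "?D \<subseteq> ?A \<union> (?D - ?A)" by blast
  then have "card ?D \<le> card (?A \<union> (?D - ?A))" using finU by (intro card_mono) auto
  also have "\<dots> \<le> card ?A + card (?D - ?A)" by (rule card_Un_le)
  finally show "I \<le> card ?A + 1" using c1 by (simp add: card_image)
qed

lemma odd_div: "odd (d::nat) \<Longrightarrow> (d - 1) div 2 = d div 2"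
  by (elim oddE) simp

lemma L_alt: "L I S = (I - S) div 2"
  unfolding L_def using odd_div[of "I - S"] by (simp add: diff_diff_left)

lemma arith1: "2*b + c = (a::nat) \<Longrightarrow> c \<le> S \<Longrightarrow> I \<le> a + 1 \<Longrightarrow> L I S \<le> b"
  unfolding L_alt by linarith

lemma arith2: "2*b + c = (a::nat) \<Longrightarrow> S \<le> c \<Longrightarrow> a \<le> I \<Longrightarrow> b \<le> L I S"
  unfolding L_alt by linarith

theorem lemma1:
  fixes I S :: nat
  shows "Min (bb_count ` {W. possible_wiring I S W}) = L I S
       \<and> Max (bb_count ` {W. possible_wiring I S W}) = I div 2"
proof -
  let ?A = "bb_count ` {W. possible_wiring I S W}"
  have lo: "L I S \<le> bb_count W" and hi: "bb_count W \<le> I div 2" if "possible_wiring I S W" for W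
  proof -
    have r: "run I S I W" using that by (simp add: possible_wiring_def)
    note b = bb_bounds[OF r]
    show "L I S \<le> bb_count W" using arith1[OF b(1) b(2) b(4)] .
    show "bb_count W \<le> I div 2" using b by linarith
  qed
  have fA: "finite ?A"
  proof (rule finite_subset[of _ "{..I div 2}"])
    show "?A \<subseteq> {..I div 2}" using hi by blast
  qed simp
  obtain Wm where wm: "possible_wiring I S Wm" "bb_count Wm = I div 2"
  proof -
    have r0: "run I S (2 * (I div 2)) ((\<lambda>i. {Inl (2*i), Inl (2*i+1)}) ` {..<I div 2})"
      by (rule run_max) simp
    obtain W where W: "run I S I W" "(\<lambda>i. {Inl (2*i), Inl (2*i+1)}) ` {..<I div 2} \<subseteq> W"
      using run_ext[OF r0] by auto
    have inj: "inj_on (\<lambda>i. {Inl (2*i), Inl (2*i+1)} :: device set) {..<I div 2}"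
      by (auto simp: inj_on_def doubleton_eq_iff)
    have "bb_count ((\<lambda>i. {Inl (2*i), Inl (2*i+1)}) ` {..<I div 2}) = I div 2"
    proof -
      have "{p \<in> (\<lambda>i. {Inl (2*i), Inl (2*i+1)} :: device set) ` {..<I div 2}. \<forall>x\<in>p. is_infected x}
          = (\<lambda>i. {Inl (2*i), Inl (2*i+1)}) ` {..<I div 2}" by auto
      then show ?thesis unfolding bb_count_def using card_image[OF inj] by simp
    qed
    then have "I div 2 \<le> bb_count W" using bb_mono[OF W(2) run_fin[OF W(1)]] by simp
    moreover have "bb_count W \<le> I div 2" using hi W(1) by (simp add: possible_wiring_def)
    ultimately show ?thesis using that W(1) by (simp add: possible_wiring_def)
  qed
  obtain Wn where wn: "possible_wiring I S Wn" "bb_count Wn = L I S"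
  proof (cases "I \<le> S")
    case True
    have r: "run I S I ((\<lambda>i. {Inl i, Inr i}) ` {..<I})" using True by (intro run_min) auto
    have "bb_count ((\<lambda>i. {Inl i, Inr i}) ` {..<I}) = 0" by (auto simp: bb_count_def)
    then show ?thesis using that r True by (simp add: possible_wiring_def L_def)
  next
    case False
    have r0: "run I S S ((\<lambda>i. {Inl i, Inr i}) ` {..<S})" using False by (intro run_min) auto
    obtain W where W: "run I S I W" "(\<lambda>i. {Inl i, Inr i}) ` {..<S} \<subseteq> W"
      using run_ext[OF r0] False by auto
    have "(Inr ` {..<S} :: device set) \<subseteq> \<Union>W \<inter> range Inr" using W(2) by blast
    then have "card (Inr ` {..<S} :: device set) \<le> card (\<Union>W \<inter> range Inr)"
      using finite_subset[OF run_sub[OF W(1)]] by (intro card_mono) (auto simp: devices_def)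
    then have "S \<le> card (\<Union>W \<inter> range Inr)" by (simp add: card_image)
    then have "bb_count W \<le> L I S" using arith2[OF bb_bounds(1)[OF W(1)] _ bb_bounds(3)[OF W(1)]] by blast
    moreover have "L I S \<le> bb_count W" using lo W(1) by (simp add: possible_wiring_def)
    ultimately show ?thesis using that W(1) by (simp add: possible_wiring_def)
  qed
  have "Min ?A = L I S"
  proof (rule Min_eqI[OF fA])
    show "L I S \<in> ?A" using wn by (metis image_eqI mem_Collect_eq)
  qed (use lo in blast)
  moreover have "Max ?A = I div 2"
  proof (rule Max_eqI[OF fA])
    show "I div 2 \<in> ?A" using wm by (metis image_eqI mem_Collect_eq)
  qed (use hi in blast)
  ultimately show ?thesis by simp
qed

end
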